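(* Let $(Z_{n}')_{n\ge 0}$ be a branching process in iid random environment (BPRE) with $Z_\varnothing$ ancestors and iid environmental sequence $\Lambda:=(\Lambda_{n})_{n\ge 0}$ taking values in $\{\mathcal{L}(X^{(j,k)})\,|\,1\le j\le k<\infty\}$ and such that \begin{equation*} \mathbb{P}\left(\Lambda_{0}=\mathcal{L}(X^{(j,k)})\right)=\frac{p_{k}}{\nu} \end{equation*} for all $1\le j\le k<\infty$. Then $(Z_{V_{n}})_{n\ge 0}$ and $(Z_{n}')_{n\ge 0}$ are equal in law.
   Context: Branching-within-branching process: cells form a Galton-Watson tree $\mathbb{T}$ in the Ulam-Harris tree $\mathbb{V}$ (root $\varnothing$), where cell $\mathsf{v}$ has $N_{\mathsf{v}}$ daughter cells, the $N_{\mathsf{v}}$ being iid copies of $N$ with $\mathbb{P}(N=k)=p_k$ and finite mean $\nu=\mathbb{E}N$. For each $k\in\mathbb{N}$, $X^{(\bullet,k)}_{i,\mathsf{v}}=(X^{(1,k)}_{i,\mathsf{v}},\dots,X^{(k,k)}_{i,\mathsf{v}})$, $i\in\mathbb{N}$, $\mathsf{v}\in\mathbb{V}$, are iid copies of an $\mathbb{N}_0^k$-valued random vector $X^{(\bullet,k)}=(X^{(1,k)},\dots,X^{(k,k)})$; these families are mutually independent over $k$ and independent of $(N_{\mathsf{v}})$. $X^{(j,k)}_{i,\mathsf{v}}$ is the number of offspring of the $i$-th parasite in cell $\mathsf{v}$ sent to daughter cell $\mathsf{v}j$ when $\mathsf{v}$ has $k$ daughters. The number of parasites $Z_{\mathsf{v}}$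 in cell $\mathsf{v}$ satisfies $Z_\varnothing$ given and $Z_{\mathsf{v}j}=\sum_{i=1}^{Z_{\mathsf{v}}}X^{(j,N_{\mathsf{v}})}_{i,\mathsf{v}}$ (with $X^{(j,k)}:=0$ for $j>k$). Assume $0<\gamma:=\sum_{k\ge1}p_k\sum_{j=1}^k\mathbb{E}X^{(j,k)}<\infty$. Random cell line (spine): let $(C_n,T_n)_{n\ge0}$ be iid, independent of $(N_{\mathsf{v}})$ and of all $X^{(\bullet,k)}_{i,\mathsf{v}}$, with $\mathbb{P}(T_n=k)=kp_k/\nu$ (size-biased law of $N$) and $\mathbb{P}(C_n=l\,|\,T_n=k)=1/k$ for $1\le l\le k$. Set $V_0=\varnothing$ and $V_n=V_{n-1}C_{n-1}$ for $n\ge1$. Along this line the parasite numbers satisfy $Z_{V_{n+1}}=\sum_{i=1}^{Z_{V_n}}X^{(C_n,T_n)}_{i,V_n}$. *)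

theory Defs
  imports "HOL-Probability.Probability"
begin

text \<open>Component j (1-based) of an offspring vector of length k; 0 if j is out of range
  (convention X^(j,k) := 0 for j > k).\<close>
definition xcomp :: "nat list \<Rightarrow> nat \<Rightarrow> nat" where
  "xcomp xs j = (if 1 \<le> j \<and> j \<le> length xs then xs ! (j - 1) else 0)"

definition marg :: "(nat \<Rightarrow> nat list pmf) \<Rightarrow> nat \<Rightarrow> nat \<Rightarrow> nat pmf" where
  "marg Xlaw j k = map_pmf (\<lambda>xs. xcomp xs j) (Xlaw k)"

definition gamma :: "nat pmf \<Rightarrow> (nat \<Rightarrow> nat list pmf) \<Rightarrow> ennreal" where
  "gamma p Xlaw = (\<Sum>k. ennreal (pmf p k) *
      (\<Sum>j\<in>{1..k}. \<integral>\<^sup>+ xs. ennreal (real (xcomp xs j)) \<partial>measure_pmf (Xlaw k)))"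

text \<open>The family of all basic random elements (offspring vectors X^(.,k)_{i,v} and
  spine choices (C_n,T_n)), indexed by a sum type, for stating mutual independence.\<close>
fun allvars :: "(nat \<Rightarrow> nat \<Rightarrow> nat list \<Rightarrow> 'a \<Rightarrow> nat list) \<Rightarrow> (nat \<Rightarrow> 'a \<Rightarrow> nat \<times> nat)
     \<Rightarrow> (nat \<times> nat \<times> nat list) + nat \<Rightarrow> 'a \<Rightarrow> nat list + (nat \<times> nat)" where
  "allvars X CT (Inl (k, i, v)) = (\<lambda>\<omega>. Inl (X k i v \<omega>))"
| "allvars X CT (Inr n) = (\<lambda>\<omega>. Inr (CT n \<omega>))"

text \<open>Random cell line: V_0 = root, V_{n+1} = V_n C_n (Ulam-Harris words).\<close>
primrec spineV :: "(nat \<Rightarrow> 'a \<Rightarrow> nat \<times> nat) \<Rightarrow> nat \<Rightarrow> 'a \<Rightarrow> nat list" where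
  "spineV CT 0 \<omega> = []"
| "spineV CT (Suc n) \<omega> = spineV CT n \<omega> @ [fst (CT n \<omega>)]"

primrec spineZ :: "nat \<Rightarrow> (nat \<Rightarrow> nat \<Rightarrow> nat list \<Rightarrow> 'a \<Rightarrow> nat list)
     \<Rightarrow> (nat \<Rightarrow> 'a \<Rightarrow> nat \<times> nat) \<Rightarrow> nat \<Rightarrow> 'a \<Rightarrow> nat" where
  "spineZ z0 X CT 0 \<omega> = z0"
| "spineZ z0 X CT (Suc n) \<omega> =
     (\<Sum>i\<in>{1..spineZ z0 X CT n \<omega>}. xcomp (X (snd (CT n \<omega>)) i (spineV CT n \<omega>) \<omega>) (fst (CT n \<omega>)))"

primrec sum_iid :: "nat pmf \<Rightarrow> nat \<Rightarrow> nat pmf" where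
  "sum_iid l 0 = return_pmf 0"
| "sum_iid l (Suc m) = bind_pmf l (\<lambda>a. map_pmf ((+) a) (sum_iid l m))"

primrec iid_list :: "'b pmf \<Rightarrow> nat \<Rightarrow> 'b list pmf" where
  "iid_list e 0 = return_pmf []"
| "iid_list e (Suc n) = bind_pmf e (\<lambda>x. map_pmf (Cons x) (iid_list e n))"

fun gw_varying :: "nat pmf list \<Rightarrow> nat \<Rightarrow> nat list pmf" where
  "gw_varying [] z = return_pmf [z]"
| "gw_varying (l # ls) z = bind_pmf (sum_iid l z) (\<lambda>y. map_pmf (Cons z) (gw_varying ls y))"

text \<open>BPRE with iid environment of law e and z0 ancestors: (annealed) law of the path
  (Z'_0,...,Z'_n): draw the environment Lambda_0..Lambda_{n-1} iid, then run the GW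
  process in that environment.\<close>
definition bpre_law :: "nat pmf pmf \<Rightarrow> nat \<Rightarrow> nat \<Rightarrow> nat list pmf" where
  "bpre_law e z0 n = bind_pmf (iid_list e n) (\<lambda>ls. gw_varying ls z0)"

end

theory Submission imports Defs begin

lemma meas_pair_cs:
  fixes f :: "'a \<Rightarrow> 'b::countable" and g :: "'a \<Rightarrow> 'c::countable"
  assumes "f \<in> measurable N (count_space UNIV)" "g \<in> measurable N (count_space UNIV)"
  shows "(\<lambda>x. (f x, g x)) \<in> measurable N (count_space UNIV)"
proof -
  have "(\<lambda>x. (f x, g x)) -` {(a,b)} \<inter> space N = (f -` {a} \<inter> space N) \<inter> (g -` {b} \<inter> space N)" for a b
    by auto
  then show ?thesis using assms
    by (auto simp: measurable_count_space_eq2_countable intro!: sets.Int)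
qed

lemma meas_comp_cs:
  assumes "f \<in> measurable N (count_space UNIV)"
  shows "(\<lambda>x. h (f x)) \<in> measurable N (count_space UNIV)"
  using measurable_compose[OF assms, of h "count_space UNIV"] by simp

lemma meas_sum_cs:
  fixes f :: "'i \<Rightarrow> 'a \<Rightarrow> nat"
  assumes "finite A" "\<And>i. i \<in> A \<Longrightarrow> f i \<in> measurable N (count_space UNIV)"
  shows "(\<lambda>x. \<Sum>i\<in>A. f i x) \<in> measurable N (count_space UNIV)"
  using assms
proof (induction A rule: finite_induct)
  case empty
  then show ?case by simp
next
  case (insert a A)
  have "(\<lambda>x. (f a x, \<Sum>i\<in>A. f i x)) \<in> measurable N (count_space UNIV)"
    using insert by (intro meas_pair_cs) auto
  from meas_comp_cs[OF this, of "\<lambda>(u,v). u + v"] insert(1,2) show ?case by simp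
qed

lemma meas_map_cs:
  fixes f :: "'i \<Rightarrow> 'a \<Rightarrow> 'b::countable"
  assumes "\<And>i. i \<in> set xs \<Longrightarrow> f i \<in> measurable N (count_space UNIV)"
  shows "(\<lambda>x. map (\<lambda>i. f i x) xs) \<in> measurable N (count_space UNIV)"
  using assms
proof (induction xs)
  case Nil
  then show ?case by simp
next
  case (Cons a xs)
  have "(\<lambda>x. (f a x, map (\<lambda>i. f i x) xs)) \<in> measurable N (count_space UNIV)"
    using Cons by (intro meas_pair_cs) auto
  from meas_comp_cs[OF this, of "\<lambda>(u,v). u # v"] show ?case by simp
qed

lemma pred_cs:
  assumes "f \<in> measurable N (count_space UNIV)"
  shows "{x \<in> space N. P (f x)} \<in> sets N"
proof -
  have "{x \<in> space N. P (f x)} = f -` {s. P s} \<inter> space N" by auto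
  then show ?thesis using measurable_sets[OF assms, of "{s. P s}"] by simp
qed

lemma length_spineV: "length (spineV CT n \<omega>) = n"
  by (induction n) auto


lemma gw_ne: "zs \<in> set_pmf (gw_varying ls z) \<Longrightarrow> zs \<noteq> []"
  by (induction ls arbitrary: z zs) auto

lemma iid_snoc: "iid_list e (Suc n) = bind_pmf (iid_list e n) (\<lambda>ls. map_pmf (\<lambda>x. ls @ [x]) e)"
proof (induction n)
  case 0
  then show ?case by (simp add: bind_return_pmf map_pmf_def)
next
  case (Suc n)
  have "iid_list e (Suc (Suc n)) = bind_pmf e (\<lambda>x. map_pmf (Cons x) (iid_list e (Suc n)))"
    by simp
  also have "\<dots> = bind_pmf e (\<lambda>x. map_pmf (Cons x) (bind_pmf (iid_list e n) (\<lambda>ls. map_pmf (\<lambda>y. ls @ [y]) e)))"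
    by (simp only: Suc)
  also have "\<dots> = bind_pmf (iid_list e (Suc n)) (\<lambda>ls. map_pmf (\<lambda>x. ls @ [x]) e)"
    by (simp add: map_bind_pmf bind_map_pmf bind_assoc_pmf map_pmf_comp o_def)
  finally show ?case .
qed

lemma gw_snoc: "gw_varying (ls @ [l]) z =
   bind_pmf (gw_varying ls z) (\<lambda>zs. map_pmf (\<lambda>y. zs @ [y]) (sum_iid l (last zs)))"
proof (induction ls arbitrary: z)
  case Nil
  then show ?case by (simp add: bind_return_pmf map_pmf_def)
next
  case (Cons a ls)
  have "gw_varying ((a # ls) @ [l]) z = bind_pmf (sum_iid a z) (\<lambda>y. map_pmf (Cons z) (gw_varying (ls @ [l]) y))"
    by simp
  also have "\<dots> = bind_pmf (sum_iid a z) (\<lambda>y. map_pmf (Cons z)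
      (bind_pmf (gw_varying ls y) (\<lambda>zs. map_pmf (\<lambda>w. zs @ [w]) (sum_iid l (last zs)))))"
    by (simp only: Cons)
  also have "\<dots> = bind_pmf (sum_iid a z) (\<lambda>y. bind_pmf (gw_varying ls y) (\<lambda>zs.
      map_pmf (\<lambda>w. (z # zs) @ [w]) (sum_iid l (last (z # zs)))))"
    by (intro bind_pmf_cong refl) (auto simp: map_bind_pmf map_pmf_comp o_def dest: gw_ne intro!: bind_pmf_cong)
  also have "\<dots> = bind_pmf (gw_varying (a # ls) z) (\<lambda>zs. map_pmf (\<lambda>y. zs @ [y]) (sum_iid l (last zs)))"
    by (simp add: bind_map_pmf bind_assoc_pmf)
  finally show ?case .
qed

lemma bpre_Suc: "bpre_law e z0 (Suc n) =
  bind_pmf (bpre_law e z0 n) (\<lambda>zs. map_pmf (\<lambda>y. zs @ [y]) (bind_pmf e (\<lambda>L. sum_iid L (last zs))))"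
proof -
  have "bpre_law e z0 (Suc n) = bind_pmf (iid_list e n) (\<lambda>ls. bind_pmf e (\<lambda>l. gw_varying (ls @ [l]) z0))"
    unfolding bpre_law_def iid_snoc by (simp add: bind_map_pmf bind_assoc_pmf)
  also have "\<dots> = bind_pmf (iid_list e n) (\<lambda>ls. bind_pmf e (\<lambda>l. bind_pmf (gw_varying ls z0)
       (\<lambda>zs. map_pmf (\<lambda>y. zs @ [y]) (sum_iid l (last zs)))))"
    by (simp only: gw_snoc)
  also have "\<dots> = bind_pmf (iid_list e n) (\<lambda>ls. bind_pmf (gw_varying ls z0) (\<lambda>zs. bind_pmf e
       (\<lambda>l. map_pmf (\<lambda>y. zs @ [y]) (sum_iid l (last zs)))))"
    by (subst bind_commute_pmf) (rule refl)
  also have "\<dots> = bind_pmf (bpre_law e z0 n) (\<lambda>zs. map_pmf (\<lambda>y. zs @ [y]) (bind_pmf e (\<lambda>L. sum_iid L (last zs))))"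
    unfolding bpre_law_def by (simp add: bind_assoc_pmf map_bind_pmf)
  finally show ?thesis .
qed

lemma pmf_snoc:
  "ennreal (pmf (bind_pmf B (\<lambda>ws. map_pmf (\<lambda>y. ws @ [y]) (G ws))) (zs @ [y])) =
   ennreal (pmf B zs) * ennreal (pmf (G zs) y)"
proof -
  have inj: "inj (\<lambda>y. ws @ [y])" for ws :: "'b list" by (auto simp: inj_def)
  have "ennreal (pmf (map_pmf (\<lambda>y. ws @ [y]) (G ws)) (zs @ [y])) =
        ennreal (pmf (G zs) y) * indicator {zs} ws" for ws
  proof (cases "ws = zs")
    case True
    then show ?thesis using pmf_map_inj'[OF inj[of zs], of "G zs" y] by simp
  next
    case False
    then have "pmf (map_pmf (\<lambda>y. ws @ [y]) (G ws)) (zs @ [y]) = 0"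
      by (intro pmf_map_outside) auto
    then show ?thesis using False by simp
  qed
  then have "ennreal (pmf (bind_pmf B (\<lambda>ws. map_pmf (\<lambda>y. ws @ [y]) (G ws))) (zs @ [y])) =
     (\<integral>\<^sup>+ws. ennreal (pmf (G zs) y) * indicator {zs} ws \<partial>measure_pmf B)"
    by (simp add: ennreal_pmf_bind)
  also have "\<dots> = ennreal (pmf (G zs) y) * emeasure (measure_pmf B) {zs}"
    by (rule nn_integral_cmult_indicator) simp
  finally show ?thesis by (simp add: emeasure_pmf_single mult.commute)
qed

lemma pmf_snoc_nil:
  "pmf (bind_pmf B (\<lambda>ws. map_pmf (\<lambda>y. ws @ [y]) (G ws))) [] = 0"
  by (auto simp: pmf_eq_0_set_pmf)

locale spine_setup = prob_space M for M :: "'a measure" +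
  fixes X :: "nat \<Rightarrow> nat \<Rightarrow> nat list \<Rightarrow> 'a \<Rightarrow> nat list" and CT :: "nat \<Rightarrow> 'a \<Rightarrow> nat \<times> nat"
    and Xlaw :: "nat \<Rightarrow> nat list pmf"
  assumes indep: "indep_vars (\<lambda>_. count_space UNIV) (allvars X CT) UNIV"
    and X_law: "\<And>k i v. distr M (count_space UNIV) (X k i v) = measure_pmf (Xlaw k)"
begin

definition Ev where "Ev i = {allvars X CT i -` A \<inter> space M | A. A \<in> sets (count_space UNIV)}"
definition NS where "NS S = sigma (space M) (\<Union>i\<in>S. Ev i)"

lemma Ev_sub: "Ev i \<subseteq> sets M"
  using indep unfolding indep_vars_def2 Ev_def by (auto intro: measurable_sets)

lemma Ev_pow: "(\<Union>i\<in>S. Ev i) \<subseteq> Pow (space M)"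
  using Ev_sub sets.sets_into_space by blast

lemma sets_NS: "sets (NS S) = sigma_sets (space M) (\<Union>i\<in>S. Ev i)"
  unfolding NS_def using Ev_pow by (simp add: sets_measure_of)

lemma space_NS[simp]: "space (NS S) = space M"
  unfolding NS_def using Ev_pow by (simp add: space_measure_of)

lemma sets_NS_sub: "sets (NS S) \<subseteq> sets M"
  unfolding sets_NS using Ev_sub by (intro sets.sigma_sets_subset) auto

lemma NS_sub_M: "f \<in> measurable (NS S) N \<Longrightarrow> f \<in> measurable M N"
  using sets_NS_sub unfolding measurable_def by auto

lemma NS_mono: "S \<subseteq> T \<Longrightarrow> f \<in> measurable (NS S) N \<Longrightarrow> f \<in> measurable (NS T) N"
proof -
  assume "S \<subseteq> T"
  then have "sets (NS S) \<subseteq> sets (NS T)" unfolding sets_NS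
    by (intro sigma_sets_mono') auto
  then show "f \<in> measurable (NS S) N \<Longrightarrow> f \<in> measurable (NS T) N"
    unfolding measurable_def by auto
qed

lemma Y_meas: "i \<in> S \<Longrightarrow> allvars X CT i \<in> measurable (NS S) (count_space UNIV)"
  unfolding measurable_def sets_NS Ev_def by (auto intro!: sigma_sets.Basic)

lemma X_meas: "Inl (k,i,v) \<in> S \<Longrightarrow> X k i v \<in> measurable (NS S) (count_space UNIV)"
  using meas_comp_cs[OF Y_meas, of "Inl (k,i,v)" S projl] by simp

lemma CT_meas: "Inr n \<in> S \<Longrightarrow> CT n \<in> measurable (NS S) (count_space UNIV)"
  using meas_comp_cs[OF Y_meas, of "Inr n" S projr] by simp

lemma indep2:
  assumes "S \<inter> T = {}" "A \<in> sets (NS S)" "B \<in> sets (NS T)"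
  shows "emeasure M (A \<inter> B) = emeasure M A * emeasure M B"
proof -
  have ind: "indep_sets Ev UNIV"
    using indep unfolding indep_vars_def2 Ev_def by simp
  have "indep_sets (\<lambda>j. sigma_sets (space M) (\<Union>i\<in>case_bool S T j. Ev i)) UNIV"
  proof (rule indep_sets_collect_sigma)
    show "indep_sets Ev (\<Union>j. case_bool S T j)"
      by (rule indep_sets_mono_index[OF _ ind]) auto
    show "Int_stable (Ev i)" for i
      unfolding Int_stable_def Ev_def
    proof (safe)
      fix A B :: "(nat list + nat \<times> nat) set"
      show "\<exists>C. (allvars X CT i -` A \<inter> space M) \<inter> (allvars X CT i -` B \<inter> space M) = allvars X CT i -` C \<inter> space M \<and> C \<in> sets (count_space UNIV)"
        by (intro exI[where x="A \<inter> B"]) auto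
    qed
    show "disjoint_family_on (case_bool S T) UNIV"
      using assms(1) by (auto simp: disjoint_family_on_def split: bool.split)
  qed
  from indep_setsD[OF this, of UNIV "case_bool A B"] assms(2,3)
  have "prob (A \<inter> B) = prob A * prob B"
    by (simp add: sets_NS UNIV_bool Int_commute)
  then show ?thesis
    by (simp add: emeasure_eq_measure ennreal_mult'' )
qed

definition Gn :: "nat \<Rightarrow> ((nat \<times> nat \<times> nat list) + nat) set" where
  "Gn n = {Inl (k,i,v) | k i v. length v < n} \<union> {Inr m | m. m < n}"

lemma spine_meas:
  "m \<le> n \<Longrightarrow> spineV CT m \<in> measurable (NS (Gn n)) (count_space UNIV) \<and>
     spineZ z0 X CT m \<in> measurable (NS (Gn n)) (count_space UNIV)"
proof (induction m)
  case 0
  then show ?case by simp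
next
  case (Suc m)
  then have IH: "spineV CT m \<in> measurable (NS (Gn n)) (count_space UNIV)"
     "spineZ z0 X CT m \<in> measurable (NS (Gn n)) (count_space UNIV)" by auto
  have ct: "CT m \<in> measurable (NS (Gn n)) (count_space UNIV)"
    using Suc.prems by (intro CT_meas) (auto simp: Gn_def)
  have "(\<lambda>\<omega>. (spineV CT m \<omega>, CT m \<omega>)) \<in> measurable (NS (Gn n)) (count_space UNIV)"
    by (intro meas_pair_cs IH ct)
  from meas_comp_cs[OF this, of "\<lambda>(v,c). v @ [fst c]"]
  have V0: "(\<lambda>\<omega>. spineV CT m \<omega> @ [fst (CT m \<omega>)]) \<in> measurable (NS (Gn n)) (count_space UNIV)"
    by (simp add: case_prod_beta)
  have eqV: "spineV CT (Suc m) = (\<lambda>\<omega>. spineV CT m \<omega> @ [fst (CT m \<omega>)])"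
    by (rule ext) simp
  have V: "spineV CT (Suc m) \<in> measurable (NS (Gn n)) (count_space UNIV)"
    unfolding eqV by (rule V0)
  define T where "T = (\<lambda>(t :: nat \<times> (nat \<times> nat) \<times> nat list) \<omega>. case t of (z, (l,k), v) \<Rightarrow>
     if length v = m then (\<Sum>i\<in>{1..z}. xcomp (X k i v \<omega>) l) else 0)"
  have Tm: "T t \<in> measurable (NS (Gn n)) (count_space UNIV)" for t
  proof -
    obtain z l k v where t: "t = (z,(l,k),v)" by (cases t) auto
    show ?thesis
    proof (cases "length v = m")
      case True
      have "(\<lambda>\<omega>. \<Sum>i\<in>{1..z}. xcomp (X k i v \<omega>) l) \<in> measurable (NS (Gn n)) (count_space UNIV)"
        using Suc.prems True
        by (intro meas_sum_cs meas_comp_cs[where h="\<lambda>xs. xcomp xs l"] X_meas) (auto simp: Gn_def)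
      then show ?thesis using True by (simp add: T_def t)
    next
      case False
      then show ?thesis by (simp add: T_def t)
    qed
  qed
  have g: "(\<lambda>\<omega>. (spineZ z0 X CT m \<omega>, CT m \<omega>, spineV CT m \<omega>)) \<in> measurable (NS (Gn n)) (count_space UNIV)"
    by (intro meas_pair_cs IH ct)
  have eq: "spineZ z0 X CT (Suc m) = (\<lambda>\<omega>. T (spineZ z0 X CT m \<omega>, CT m \<omega>, spineV CT m \<omega>) \<omega>)"
    by (auto simp: T_def length_spineV case_prod_beta split: prod.split)
  have "spineZ z0 X CT (Suc m) \<in> measurable (NS (Gn n)) (count_space UNIV)"
    unfolding eq by (rule measurable_compose_countable[OF Tm g])
  with V show ?case by (intro conjI)
qed


lemma sum_law:
  "emeasure M {\<omega> \<in> space M. (\<Sum>i\<in>{1..z}. g (X k i v \<omega>)) = (y::nat)} =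
     ennreal (pmf (sum_iid (map_pmf g (Xlaw k)) z) y)"
proof (induction z arbitrary: y)
  case 0
  then show ?case by (auto simp: pmf_return indicator_def emeasure_space_1)
next
  case (Suc z)
  define S where "S = (\<lambda>\<omega>. \<Sum>i\<in>{1..z}. g (X k i v \<omega>))"
  define L where "L = map_pmf g (Xlaw k)"
  define Aa where "Aa = (\<lambda>a. {\<omega> \<in> space M. g (X k (Suc z) v \<omega>) = a})"
  define Bb where "Bb = (\<lambda>a. {\<omega> \<in> space M. a \<le> y \<and> S \<omega> = y - a})"
  have Sm: "S \<in> measurable (NS {Inl (k,i,v) | i. i \<in> {1..z}}) (count_space UNIV)"
    unfolding S_def
  proof (rule meas_sum_cs)
    fix i assume "i \<in> {1..z}"
    then have "X k i v \<in> measurable (NS {Inl (k,i,v) | i. i \<in> {1..z}}) (count_space UNIV)"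
      by (intro X_meas) blast
    then show "(\<lambda>\<omega>. g (X k i v \<omega>)) \<in> measurable (NS {Inl (k,i,v) | i. i \<in> {1..z}}) (count_space UNIV)"
      by (rule meas_comp_cs)
  qed simp
  have Am: "(\<lambda>\<omega>. g (X k (Suc z) v \<omega>)) \<in> measurable (NS {Inl (k,Suc z,v)}) (count_space UNIV)"
    by (rule meas_comp_cs, rule X_meas) simp
  have Aa_sets: "Aa a \<in> sets (NS {Inl (k,Suc z,v)})" for a
    using pred_cs[OF Am, of "\<lambda>s. s = a"] unfolding Aa_def space_NS .
  have Bb_sets: "Bb a \<in> sets (NS {Inl (k,i,v) | i. i \<in> {1..z}})" for a
    using pred_cs[OF Sm, of "\<lambda>s. a \<le> y \<and> s = y - a"] unfolding Bb_def space_NS .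
  have evt: "{\<omega> \<in> space M. (\<Sum>i\<in>{1..Suc z}. g (X k i v \<omega>)) = y} = (\<Union>a\<in>UNIV. Aa a \<inter> Bb a)"
  proof -
    have "(\<Sum>i\<in>{1..Suc z}. g (X k i v \<omega>)) = g (X k (Suc z) v \<omega>) + S \<omega>" for \<omega>
      unfolding S_def by (simp add: add.commute)
    then show ?thesis unfolding Aa_def Bb_def by force
  qed
  have "emeasure M (\<Union>a\<in>UNIV. Aa a \<inter> Bb a) = (\<integral>\<^sup>+a. emeasure M (Aa a \<inter> Bb a) \<partial>count_space UNIV)"
  proof (rule emeasure_UN_countable)
    show "Aa a \<inter> Bb a \<in> sets M" for a
      using Aa_sets[of a] Bb_sets[of a] sets_NS_sub by blast
    show "disjoint_family_on (\<lambda>a. Aa a \<inter> Bb a) UNIV"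
      unfolding disjoint_family_on_def Aa_def by blast
  qed simp
  also have "\<dots> = (\<integral>\<^sup>+a. emeasure M (Aa a) * emeasure M (Bb a) \<partial>count_space UNIV)"
    using Aa_sets Bb_sets by (intro nn_integral_cong indep2[where S="{Inl (k,Suc z,v)}" and T="{Inl (k,i,v) | i. i \<in> {1..z}}"]) auto
  also have "\<dots> = (\<integral>\<^sup>+a. ennreal (pmf L a) * ennreal (pmf (map_pmf ((+) a) (sum_iid L z)) y) \<partial>count_space UNIV)"
  proof (intro nn_integral_cong)
    fix a
    have Xm: "X k (Suc z) v \<in> measurable M (count_space UNIV)"
      by (intro NS_sub_M X_meas) auto
    have "emeasure M (Aa a) = emeasure M (X k (Suc z) v -` (g -` {a}) \<inter> space M)"
      unfolding Aa_def by (intro arg_cong[where f="emeasure M"]) auto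
    also have "\<dots> = emeasure (distr M (count_space UNIV) (X k (Suc z) v)) (g -` {a})"
      using Xm by (simp add: emeasure_distr)
    also have "\<dots> = emeasure (measure_pmf (Xlaw k)) (g -` {a})"
      by (simp add: X_law)
    also have "\<dots> = emeasure (measure_pmf L) {a}"
      unfolding L_def map_pmf_rep_eq by (simp add: emeasure_distr)
    also have "\<dots> = ennreal (pmf L a)" by (simp add: emeasure_pmf_single)
    finally have 1: "emeasure M (Aa a) = ennreal (pmf L a)" .
    have 2: "emeasure M (Bb a) = ennreal (pmf (map_pmf ((+) a) (sum_iid L z)) y)"
    proof (cases "a \<le> y")
      case True
      have "pmf (map_pmf ((+) a) (sum_iid L z)) (a + (y - a)) = pmf (sum_iid L z) (y - a)"
        by (intro pmf_map_inj') (auto simp: inj_on_def)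
      moreover have "Bb a = {\<omega> \<in> space M. (\<Sum>i\<in>{1..z}. g (X k i v \<omega>)) = y - a}"
        using True by (simp add: Bb_def S_def)
      ultimately show ?thesis using True Suc.IH[of "y - a"] by (simp add: L_def)
    next
      case False
      then have "pmf (map_pmf ((+) a) (sum_iid L z)) y = 0"
        by (intro pmf_map_outside) auto
      then show ?thesis using False by (simp add: Bb_def)
    qed
    show "emeasure M (Aa a) * emeasure M (Bb a) = ennreal (pmf L a) * ennreal (pmf (map_pmf ((+) a) (sum_iid L z)) y)"
      using 1 2 by simp
  qed
  also have "\<dots> = ennreal (pmf (sum_iid L (Suc z)) y)"
    by (simp add: ennreal_pmf_bind nn_integral_measure_pmf)
  finally show ?case using evt by (simp add: L_def)
qed

lemma sets_NS_mono: "S \<subseteq> T \<Longrightarrow> sets (NS S) \<subseteq> sets (NS T)"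
  unfolding sets_NS by (intro sigma_sets_mono') auto

definition path :: "nat \<Rightarrow> nat \<Rightarrow> 'a \<Rightarrow> nat list" where
  "path z0 n \<omega> = map (\<lambda>m. spineZ z0 X CT m \<omega>) [0..<Suc n]"

lemma path_meas: "path z0 n \<in> measurable (NS (Gn n)) (count_space UNIV)"
  unfolding path_def[abs_def]
  by (rule meas_map_cs) (use spine_meas in auto)

lemma path_Suc: "path z0 (Suc n) \<omega> = path z0 n \<omega> @ [spineZ z0 X CT (Suc n) \<omega>]"
  unfolding path_def by simp

lemma last_path: "last (path z0 n \<omega>) = spineZ z0 X CT n \<omega>"
  unfolding path_def by simp

lemma path_ne: "path z0 n \<omega> \<noteq> []"
  unfolding path_def by simp

lemma step:
  "emeasure M {\<omega> \<in> space M. path z0 (Suc n) \<omega> = zs @ [y]} =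
   emeasure M {\<omega> \<in> space M. path z0 n \<omega> = zs} *
   (\<integral>\<^sup>+ lk. emeasure M {\<omega> \<in> space M. CT n \<omega> = lk} *
        ennreal (pmf (sum_iid (marg Xlaw (fst lk) (snd lk)) (last zs)) y) \<partial>count_space UNIV)"
proof -
  define z where "z = last zs"
  define A where "A = (\<lambda>v. {\<omega> \<in> space M. path z0 n \<omega> = zs \<and> spineV CT n \<omega> = v})"
  define B where "B = (\<lambda>lk. {\<omega> \<in> space M. CT n \<omega> = lk})"
  define C where "C = (\<lambda>v (lk::nat\<times>nat). {\<omega> \<in> space M. (\<Sum>i\<in>{1..z}. xcomp (X (snd lk) i v \<omega>) (fst lk)) = y})"
  define f where "f = (\<lambda>lk::nat\<times>nat. emeasure M (B lk) * ennreal (pmf (sum_iid (marg Xlaw (fst lk) (snd lk)) z) y))"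
  define I where "I = (\<integral>\<^sup>+ lk. f lk \<partial>count_space UNIV)"
  have pm: "(\<lambda>\<omega>. (path z0 n \<omega>, spineV CT n \<omega>)) \<in> measurable (NS (Gn n)) (count_space UNIV)"
    using spine_meas[of n n] by (intro meas_pair_cs path_meas) auto
  have A_sets: "A v \<in> sets (NS (Gn n))" for v
    using pred_cs[OF pm, of "\<lambda>(a,b). a = zs \<and> b = v"] unfolding A_def space_NS by simp
  have B_sets: "B lk \<in> sets (NS {Inr n})" for lk
    using pred_cs[OF CT_meas[of n "{Inr n}"], of "\<lambda>c. c = lk"] unfolding B_def space_NS by simp
  have C_sets: "C v lk \<in> sets (NS {Inl (snd lk, i, v) | i. True})" for v lk
  proof -
    have "(\<lambda>\<omega>. \<Sum>i\<in>{1..z}. xcomp (X (snd lk) i v \<omega>) (fst lk)) \<in> measurable (NS {Inl (snd lk, i, v) | i. True}) (count_space UNIV)"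
    proof (rule meas_sum_cs)
      fix i
      have "X (snd lk) i v \<in> measurable (NS {Inl (snd lk, i, v) | i. True}) (count_space UNIV)"
        by (intro X_meas) blast
      then show "(\<lambda>\<omega>. xcomp (X (snd lk) i v \<omega>) (fst lk)) \<in> measurable (NS {Inl (snd lk, i, v) | i. True}) (count_space UNIV)"
        by (rule meas_comp_cs)
    qed simp
    from pred_cs[OF this, of "\<lambda>s. s = y"] show ?thesis unfolding C_def space_NS .
  qed
  have evt: "{\<omega> \<in> space M. path z0 (Suc n) \<omega> = zs @ [y]} = (\<Union>v\<in>UNIV. \<Union>lk\<in>UNIV. A v \<inter> (B lk \<inter> C v lk))"
  proof (intro equalityI subsetI)
    fix \<omega> assume "\<omega> \<in> {\<omega> \<in> space M. path z0 (Suc n) \<omega> = zs @ [y]}"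
    then have w: "\<omega> \<in> space M" "path z0 n \<omega> = zs" "spineZ z0 X CT (Suc n) \<omega> = y"
      by (auto simp: path_Suc)
    then have "spineZ z0 X CT n \<omega> = z" using last_path[of z0 n \<omega>] by (simp add: z_def)
    with w show "\<omega> \<in> (\<Union>v\<in>UNIV. \<Union>lk\<in>UNIV. A v \<inter> (B lk \<inter> C v lk))"
      by (auto simp: A_def B_def C_def)
  next
    fix \<omega> assume "\<omega> \<in> (\<Union>v\<in>UNIV. \<Union>lk\<in>UNIV. A v \<inter> (B lk \<inter> C v lk))"
    then obtain v lk where w: "\<omega> \<in> A v" "\<omega> \<in> B lk" "\<omega> \<in> C v lk" by blast
    then have "spineZ z0 X CT n \<omega> = z" using last_path[of z0 n \<omega>] by (simp add: z_def A_def)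
    with w show "\<omega> \<in> {\<omega> \<in> space M. path z0 (Suc n) \<omega> = zs @ [y]}"
      by (auto simp: A_def B_def C_def path_Suc)
  qed
  have in_M: "S' \<in> sets (NS T') \<Longrightarrow> S' \<in> sets M" for S' T'
    using sets_NS_sub by blast
  have D_eq: "emeasure M (\<Union>lk\<in>UNIV. A v \<inter> (B lk \<inter> C v lk)) = emeasure M (A v) * I" for v
  proof -
    have "emeasure M (\<Union>lk\<in>UNIV. A v \<inter> (B lk \<inter> C v lk)) = (\<integral>\<^sup>+lk. emeasure M (A v \<inter> (B lk \<inter> C v lk)) \<partial>count_space UNIV)"
    proof (rule emeasure_UN_countable)
      show "A v \<inter> (B lk \<inter> C v lk) \<in> sets M" for lk
        using in_M[OF A_sets] in_M[OF B_sets] in_M[OF C_sets] by blast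
      show "disjoint_family_on (\<lambda>lk. A v \<inter> (B lk \<inter> C v lk)) UNIV"
        unfolding disjoint_family_on_def B_def by blast
    qed simp
    also have "\<dots> = (\<integral>\<^sup>+lk. emeasure M (A v) * f lk \<partial>count_space UNIV)"
    proof (rule nn_integral_cong)
      fix lk :: "nat \<times> nat"
      obtain l k where lk: "lk = (l,k)" by (cases lk) auto
      show "emeasure M (A v \<inter> (B lk \<inter> C v lk)) = emeasure M (A v) * f lk"
      proof (cases "length v = n")
        case False
        then have "A v = {}" unfolding A_def using length_spineV[of CT n] by auto
        then show ?thesis by simp
      next
        case True
        have d1: "Gn n \<inter> ({Inr n} \<union> {Inl (snd lk, i, v) | i. True}) = {}"
          using True by (auto simp: Gn_def)
        have BC: "B lk \<inter> C v lk \<in> sets (NS ({Inr n} \<union> {Inl (snd lk, i, v) | i. True}))"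
          using sets_NS_mono[of "{Inr n}" "{Inr n} \<union> {Inl (snd lk, i, v) | i. True}"]
            sets_NS_mono[of "{Inl (snd lk, i, v) | i. True}" "{Inr n} \<union> {Inl (snd lk, i, v) | i. True}"]
            B_sets[of lk] C_sets[of v lk]
          by (intro sets.Int) auto
        have "emeasure M (A v \<inter> (B lk \<inter> C v lk)) = emeasure M (A v) * emeasure M (B lk \<inter> C v lk)"
          by (rule indep2[OF d1 A_sets BC])
        also have "emeasure M (B lk \<inter> C v lk) = emeasure M (B lk) * emeasure M (C v lk)"
          by (rule indep2[OF _ B_sets C_sets]) auto
        also have "emeasure M (C v lk) = ennreal (pmf (sum_iid (marg Xlaw (fst lk) (snd lk)) z) y)"
          using sum_law[where g="\<lambda>xs. xcomp xs l" and z=z and k=k and v=v and y=y] unfolding C_def lk marg_def by simp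
        finally show ?thesis by (simp add: f_def)
      qed
    qed
    also have "\<dots> = emeasure M (A v) * I"
      unfolding I_def by (rule nn_integral_cmult) simp
    finally show ?thesis .
  qed
  have "emeasure M {\<omega> \<in> space M. path z0 (Suc n) \<omega> = zs @ [y]} =
        (\<integral>\<^sup>+v. emeasure M (\<Union>lk\<in>UNIV. A v \<inter> (B lk \<inter> C v lk)) \<partial>count_space UNIV)"
    unfolding evt
  proof (rule emeasure_UN_countable)
    show "(\<Union>lk\<in>UNIV. A v \<inter> (B lk \<inter> C v lk)) \<in> sets M" for v
      using in_M[OF A_sets] in_M[OF B_sets] in_M[OF C_sets] by blast
    show "disjoint_family_on (\<lambda>v. \<Union>lk\<in>UNIV. A v \<inter> (B lk \<inter> C v lk)) UNIV"
      unfolding disjoint_family_on_def A_def by blast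
  qed simp
  also have "\<dots> = (\<integral>\<^sup>+v. emeasure M (A v) * I \<partial>count_space UNIV)"
    by (rule nn_integral_cong) (rule D_eq)
  also have "\<dots> = (\<integral>\<^sup>+v. emeasure M (A v) \<partial>count_space UNIV) * I"
    by (rule nn_integral_multc) simp
  also have "(\<integral>\<^sup>+v. emeasure M (A v) \<partial>count_space UNIV) = emeasure M (\<Union>v\<in>UNIV. A v)"
  proof (rule emeasure_UN_countable[symmetric])
    show "A v \<in> sets M" for v using in_M[OF A_sets] .
    show "disjoint_family_on A UNIV"
      unfolding disjoint_family_on_def A_def by blast
  qed simp
  also have "(\<Union>v\<in>UNIV. A v) = {\<omega> \<in> space M. path z0 n \<omega> = zs}"
    unfolding A_def by blast
  finally show ?thesis by (simp add: I_def f_def z_def B_def)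
qed

end

theorem lemma1:
  fixes M :: "'a measure"
    and p :: "nat pmf"
    and Xlaw :: "nat \<Rightarrow> nat list pmf"
    and X :: "nat \<Rightarrow> nat \<Rightarrow> nat list \<Rightarrow> 'a \<Rightarrow> nat list"
    and CT :: "nat \<Rightarrow> 'a \<Rightarrow> nat \<times> nat"
    and \<nu> :: real
    and z0 :: nat
    and e :: "nat pmf pmf"
  assumes "prob_space M"
    and Xlaw_len: "\<And>k. set_pmf (Xlaw k) \<subseteq> {xs. length xs = k}"
    and nu_finite: "integrable (measure_pmf p) real"
    and nu_def: "\<nu> = measure_pmf.expectation p real"
    and gamma_pos: "0 < gamma p Xlaw"
    and gamma_fin: "gamma p Xlaw < \<infinity>"
    and indep: "prob_space.indep_vars M (\<lambda>_. count_space UNIV) (allvars X CT) UNIV"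
    and X_law: "\<And>k i v. distr M (count_space UNIV) (X k i v) = measure_pmf (Xlaw k)"
    and CT_law: "\<And>n l k. measure M {\<omega> \<in> space M. CT n \<omega> = (l, k)} =
        (if 1 \<le> l \<and> l \<le> k then (real k * pmf p k / \<nu>) * (1 / real k) else 0)"
    and env_law: "\<And>L. pmf e L =
        (\<Sum>\<^sub>\<infinity>(j, k) \<in> {(j, k). 1 \<le> j \<and> j \<le> k \<and> marg Xlaw j k = L}. pmf p k / \<nu>)"
  shows "\<forall>n. distr M (count_space UNIV) (\<lambda>\<omega>. map (\<lambda>m. spineZ z0 X CT m \<omega>) [0..<Suc n])
             = measure_pmf (bpre_law e z0 n)"
proof -
  have SS: "spine_setup M X CT Xlaw"
    unfolding spine_setup_def spine_setup_axioms_def using assms by auto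
  interpret spine_setup M X CT Xlaw by (rule SS)
  have CTm: "CT n \<in> measurable M (count_space UNIV)" for n
    by (rule NS_sub_M, rule CT_meas[of n "{Inr n}"]) simp
  define q where "q = (\<lambda>lk. measure M {\<omega> \<in> space M. CT 0 \<omega> = lk})"
  have emq: "emeasure M {\<omega> \<in> space M. CT n \<omega> = lk} = ennreal (q lk)" for n lk
  proof -
    obtain l k where lk: "lk = (l,k)" by (cases lk) auto
    show ?thesis unfolding q_def lk using CT_law[of n l k] CT_law[of 0 l k]
      by (simp add: emeasure_eq_measure)
  qed
  have qsum: "(\<integral>\<^sup>+lk. ennreal (q lk) \<partial>count_space UNIV) = 1"
  proof -
    have "(\<integral>\<^sup>+lk. ennreal (q lk) \<partial>count_space UNIV) =
          (\<integral>\<^sup>+lk. emeasure M {\<omega> \<in> space M. CT 0 \<omega> = lk} \<partial>count_space UNIV)"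
      by (simp add: emq)
    also have "\<dots> = emeasure M (\<Union>lk\<in>UNIV. {\<omega> \<in> space M. CT 0 \<omega> = lk})"
    proof (rule emeasure_UN_countable[symmetric])
      show "{\<omega> \<in> space M. CT 0 \<omega> = lk} \<in> sets M" for lk
        using pred_cs[OF CTm[of 0], of "\<lambda>c. c = lk"] .
      show "disjoint_family_on (\<lambda>lk. {\<omega> \<in> space M. CT 0 \<omega> = lk}) UNIV"
        unfolding disjoint_family_on_def by blast
    qed simp
    also have "(\<Union>lk\<in>UNIV. {\<omega> \<in> space M. CT 0 \<omega> = lk}) = space M" by blast
    finally show ?thesis by (simp add: emeasure_space_1)
  qed
  define Q where "Q = embed_pmf q"
  have pmfQ: "pmf Q lk = q lk" for lk
    unfolding Q_def
  proof (rule pmf_embed_pmf)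
    show "0 \<le> q x" for x by (simp add: q_def)
    show "(\<integral>\<^sup>+x. ennreal (q x) \<partial>count_space UNIV) = 1" by (rule qsum)
  qed
  define mg where "mg = (\<lambda>lk::nat\<times>nat. marg Xlaw (fst lk) (snd lk))"
  have e_eq: "e = map_pmf mg Q"
  proof (rule pmf_eqI)
    fix L
    have "pmf (map_pmf mg Q) L = infsum (pmf Q) (mg -` {L})"
      by (simp add: pmf_map measure_pmf_conv_infsetsum infsetsum_infsum pmf_abs_summable)
    also have "\<dots> = (\<Sum>\<^sub>\<infinity>(j, k) \<in> {(j, k). 1 \<le> j \<and> j \<le> k \<and> marg Xlaw j k = L}. pmf p k / \<nu>)"
    proof (rule infsum_cong_neutral)
      fix x assume x: "x \<in> mg -` {L} - {(j, k). 1 \<le> j \<and> j \<le> k \<and> marg Xlaw j k = L}"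
      obtain j k where xx: "x = (j,k)" by (cases x) auto
      have "\<not> (1 \<le> j \<and> j \<le> k)" using x by (auto simp: xx mg_def)
      then show "pmf Q x = 0" using CT_law[of 0 j k] by (auto simp: pmfQ q_def xx)
    next
      fix x assume x: "x \<in> {(j, k). 1 \<le> j \<and> j \<le> k \<and> marg Xlaw j k = L} - mg -` {L}"
      then show "(case x of (j, k) \<Rightarrow> pmf p k / \<nu>) = 0" by (auto simp: mg_def)
    next
      fix x assume x: "x \<in> mg -` {L} \<inter> {(j, k). 1 \<le> j \<and> j \<le> k \<and> marg Xlaw j k = L}"
      obtain j k where xx: "x = (j,k)" by (cases x) auto
      show "pmf Q x = (case x of (j, k) \<Rightarrow> pmf p k / \<nu>)"
        using x CT_law[of 0 j k] by (simp add: pmfQ q_def xx)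
    qed
    also have "\<dots> = pmf e L" by (rule env_law[symmetric])
    finally show "pmf e L = pmf (map_pmf mg Q) L" by simp
  qed
  have I_eq: "(\<integral>\<^sup>+ lk. emeasure M {\<omega> \<in> space M. CT n \<omega> = lk} *
        ennreal (pmf (sum_iid (marg Xlaw (fst lk) (snd lk)) z) y) \<partial>count_space UNIV) =
      ennreal (pmf (bind_pmf e (\<lambda>L. sum_iid L z)) y)" for n z y
  proof -
    have "ennreal (pmf (bind_pmf e (\<lambda>L. sum_iid L z)) y) =
          (\<integral>\<^sup>+lk. ennreal (pmf (sum_iid (mg lk) z) y) \<partial>measure_pmf Q)"
      by (simp add: ennreal_pmf_bind e_eq)
    also have "\<dots> = (\<integral>\<^sup>+lk. ennreal (pmf Q lk) * ennreal (pmf (sum_iid (mg lk) z) y) \<partial>count_space UNIV)"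
      by (rule nn_integral_measure_pmf)
    finally show ?thesis by (simp add: emq pmfQ mg_def)
  qed
  have main: "emeasure M {\<omega> \<in> space M. path z0 n \<omega> = zs} = ennreal (pmf (bpre_law e z0 n) zs)" for n zs
  proof (induction n arbitrary: zs)
    case 0
    have "bpre_law e z0 0 = return_pmf [z0]"
      by (simp add: bpre_law_def bind_return_pmf)
    moreover have "path z0 0 \<omega> = [z0]" for \<omega> by (simp add: path_def)
    ultimately show ?case by (auto simp: pmf_return indicator_def emeasure_space_1)
  next
    case (Suc n)
    show ?case
    proof (cases zs rule: rev_cases)
      case Nil
      have E: "{\<omega> \<in> space M. path z0 (Suc n) \<omega> = []} = {}" using path_ne by blast
      show ?thesis unfolding Nil bpre_Suc pmf_snoc_nil E by simp
    next
      case (snoc ys y)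
      show ?thesis unfolding snoc step bpre_Suc pmf_snoc Suc.IH I_eq ..
    qed
  qed
  show ?thesis
  proof
    fix n
    have pe: "(\<lambda>\<omega>. map (\<lambda>m. spineZ z0 X CT m \<omega>) [0..<Suc n]) = path z0 n"
      by (rule ext) (simp add: path_def)
    have pm: "path z0 n \<in> measurable M (count_space UNIV)"
      by (rule NS_sub_M, rule path_meas)
    show "distr M (count_space UNIV) (\<lambda>\<omega>. map (\<lambda>m. spineZ z0 X CT m \<omega>) [0..<Suc n]) = measure_pmf (bpre_law e z0 n)"
      unfolding pe
    proof (rule measure_eqI_countable[where A=UNIV])
      fix zs :: "nat list"
      have "emeasure (distr M (count_space UNIV) (path z0 n)) {zs} = emeasure M (path z0 n -` {zs} \<inter> space M)"
        using pm by (simp add: emeasure_distr)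
      also have "path z0 n -` {zs} \<inter> space M = {\<omega> \<in> space M. path z0 n \<omega> = zs}" by blast
      finally show "emeasure (distr M (count_space UNIV) (path z0 n)) {zs} = emeasure (measure_pmf (bpre_law e z0 n)) {zs}"
        by (simp add: main emeasure_pmf_single)
    qed simp_all
  qed
qed

end
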